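(* Let $M$ be a monoidal category which admits functorial inverses. Then for any choice of functorial inverses $i:M\to M$ there is a natural isomorphism $i^2(x)\cong x$.
   Context: A monoidal category $M$ admits functorial inverses if there exist a functor $i:M\to M$ and a natural isomorphism $x\otimes i(x)\cong 1$; a choice of functorial inverses is a specific such functor and natural isomorphism. *)

theory Defs
  imports Main
begin

text \<open>Categories in set-theoretic style: objects, arrows with domain and
codomain, composition (cmp g f means g after f) and identities.\<close>

record ('o, 'a) cat =
  Obj :: "'o set"
  Arr :: "'a set"
  cdom :: "'a \<Rightarrow> 'o"
  ccod :: "'a \<Rightarrow> 'o"
  cmp :: "'a \<Rightarrow> 'a \<Rightarrow> 'a"
  idt :: "'o \<Rightarrow> 'a"

definition Hom :: "('o, 'a, 'z) cat_scheme \<Rightarrow> 'o \<Rightarrow> 'o \<Rightarrow> 'a set" where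
  "Hom C x y = {f \<in> Arr C. cdom C f = x \<and> ccod C f = y}"

definition category :: "('o, 'a, 'z) cat_scheme \<Rightarrow> bool" where
  "category C \<longleftrightarrow>
     (\<forall>f \<in> Arr C. cdom C f \<in> Obj C \<and> ccod C f \<in> Obj C) \<and>
     (\<forall>x \<in> Obj C. idt C x \<in> Hom C x x) \<and>
     (\<forall>x \<in> Obj C. \<forall>y \<in> Obj C. \<forall>z \<in> Obj C. \<forall>f \<in> Hom C x y. \<forall>g \<in> Hom C y z.
        cmp C g f \<in> Hom C x z) \<and>
     (\<forall>f \<in> Arr C. cmp C f (idt C (cdom C f)) = f \<and> cmp C (idt C (ccod C f)) f = f) \<and>
     (\<forall>f \<in> Arr C. \<forall>g \<in> Arr C. \<forall>h \<in> Arr C.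
        cdom C g = ccod C f \<longrightarrow> cdom C h = ccod C g \<longrightarrow>
        cmp C h (cmp C g f) = cmp C (cmp C h g) f)"

definition iso_in :: "('o, 'a, 'z) cat_scheme \<Rightarrow> 'a \<Rightarrow> 'o \<Rightarrow> 'o \<Rightarrow> bool" where
  "iso_in C f x y \<longleftrightarrow> f \<in> Hom C x y \<and>
     (\<exists>g \<in> Hom C y x. cmp C g f = idt C x \<and> cmp C f g = idt C y)"

definition endofunctor ::
  "('o, 'a, 'z) cat_scheme \<Rightarrow> ('o \<Rightarrow> 'o) \<Rightarrow> ('a \<Rightarrow> 'a) \<Rightarrow> bool" where
  "endofunctor C Fo Fa \<longleftrightarrow>
     (\<forall>x \<in> Obj C. Fo x \<in> Obj C) \<and>
     (\<forall>x \<in> Obj C. \<forall>y \<in> Obj C. \<forall>f \<in> Hom C x y. Fa f \<in> Hom C (Fo x) (Fo y)) \<and>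
     (\<forall>x \<in> Obj C. Fa (idt C x) = idt C (Fo x)) \<and>
     (\<forall>f \<in> Arr C. \<forall>g \<in> Arr C. cdom C g = ccod C f \<longrightarrow>
        Fa (cmp C g f) = cmp C (Fa g) (Fa f))"

definition nat_trans ::
  "('o, 'a, 'z) cat_scheme \<Rightarrow> ('o \<Rightarrow> 'o) \<Rightarrow> ('a \<Rightarrow> 'a) \<Rightarrow> ('o \<Rightarrow> 'o) \<Rightarrow> ('a \<Rightarrow> 'a)
     \<Rightarrow> ('o \<Rightarrow> 'a) \<Rightarrow> bool" where
  "nat_trans C Fo Fa Go Ga \<theta> \<longleftrightarrow>
     (\<forall>x \<in> Obj C. \<theta> x \<in> Hom C (Fo x) (Go x)) \<and>
     (\<forall>f \<in> Arr C. cmp C (\<theta> (ccod C f)) (Fa f) = cmp C (Ga f) (\<theta> (cdom C f)))"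

definition nat_iso ::
  "('o, 'a, 'z) cat_scheme \<Rightarrow> ('o \<Rightarrow> 'o) \<Rightarrow> ('a \<Rightarrow> 'a) \<Rightarrow> ('o \<Rightarrow> 'o) \<Rightarrow> ('a \<Rightarrow> 'a)
     \<Rightarrow> ('o \<Rightarrow> 'a) \<Rightarrow> bool" where
  "nat_iso C Fo Fa Go Ga \<theta> \<longleftrightarrow>
     nat_trans C Fo Fa Go Ga \<theta> \<and> (\<forall>x \<in> Obj C. iso_in C (\<theta> x) (Fo x) (Go x))"

record ('o, 'a) moncat = "('o, 'a) cat" +
  tob :: "'o \<Rightarrow> 'o \<Rightarrow> 'o"
  tar :: "'a \<Rightarrow> 'a \<Rightarrow> 'a"
  munit :: "'o"
  massoc :: "'o \<Rightarrow> 'o \<Rightarrow> 'o \<Rightarrow> 'a"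
  lunit :: "'o \<Rightarrow> 'a"
  runit :: "'o \<Rightarrow> 'a"

definition monoidal_category :: "('o, 'a, 'z) moncat_scheme \<Rightarrow> bool" where
  "monoidal_category M \<longleftrightarrow>
     category M \<and>
     \<comment> \<open>the tensor product is a bifunctor\<close>
     (\<forall>x \<in> Obj M. \<forall>y \<in> Obj M. tob M x y \<in> Obj M) \<and>
     (\<forall>f \<in> Arr M. \<forall>g \<in> Arr M.
        tar M f g \<in> Hom M (tob M (cdom M f) (cdom M g)) (tob M (ccod M f) (ccod M g))) \<and>
     (\<forall>x \<in> Obj M. \<forall>y \<in> Obj M. tar M (idt M x) (idt M y) = idt M (tob M x y)) \<and>
     (\<forall>f \<in> Arr M. \<forall>f' \<in> Arr M. \<forall>g \<in> Arr M. \<forall>g' \<in> Arr M.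
        cdom M f' = ccod M f \<longrightarrow> cdom M g' = ccod M g \<longrightarrow>
        tar M (cmp M f' f) (cmp M g' g) = cmp M (tar M f' g') (tar M f g)) \<and>
     \<comment> \<open>unit object\<close>
     munit M \<in> Obj M \<and>
     \<comment> \<open>associator: natural isomorphism\<close>
     (\<forall>x \<in> Obj M. \<forall>y \<in> Obj M. \<forall>z \<in> Obj M.
        iso_in M (massoc M x y z) (tob M (tob M x y) z) (tob M x (tob M y z))) \<and>
     (\<forall>f \<in> Arr M. \<forall>g \<in> Arr M. \<forall>h \<in> Arr M.
        cmp M (massoc M (ccod M f) (ccod M g) (ccod M h)) (tar M (tar M f g) h) =
        cmp M (tar M f (tar M g h)) (massoc M (cdom M f) (cdom M g) (cdom M h))) \<and>
     \<comment> \<open>left and right unitors: natural isomorphisms\<close>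
     (\<forall>x \<in> Obj M. iso_in M (lunit M x) (tob M (munit M) x) x) \<and>
     (\<forall>f \<in> Arr M. cmp M (lunit M (ccod M f)) (tar M (idt M (munit M)) f) =
                   cmp M f (lunit M (cdom M f))) \<and>
     (\<forall>x \<in> Obj M. iso_in M (runit M x) (tob M x (munit M)) x) \<and>
     (\<forall>f \<in> Arr M. cmp M (runit M (ccod M f)) (tar M f (idt M (munit M))) =
                   cmp M f (runit M (cdom M f))) \<and>
     \<comment> \<open>pentagon\<close>
     (\<forall>w \<in> Obj M. \<forall>x \<in> Obj M. \<forall>y \<in> Obj M. \<forall>z \<in> Obj M.
        cmp M (tar M (idt M w) (massoc M x y z))
          (cmp M (massoc M w (tob M x y) z) (tar M (massoc M w x y) (idt M z))) =
        cmp M (massoc M w x (tob M y z)) (massoc M (tob M w x) y z)) \<and>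
     \<comment> \<open>triangle\<close>
     (\<forall>x \<in> Obj M. \<forall>y \<in> Obj M.
        cmp M (tar M (idt M x) (lunit M y)) (massoc M x (munit M) y) =
        tar M (runit M x) (idt M y))"

text \<open>A choice of functorial inverses: a functor i (object map io, arrow map ia)
and a natural isomorphism eps : x \<otimes> i(x) \<cong> 1 (from the functor x \<mapsto> x \<otimes> i x
to the constant functor at the unit).\<close>

definition functorial_inverses_choice ::
  "('o, 'a, 'z) moncat_scheme \<Rightarrow> ('o \<Rightarrow> 'o) \<Rightarrow> ('a \<Rightarrow> 'a) \<Rightarrow> ('o \<Rightarrow> 'a) \<Rightarrow> bool" where
  "functorial_inverses_choice M io ia eps \<longleftrightarrow>
     endofunctor M io ia \<and>
     nat_iso M (\<lambda>x. tob M x (io x)) (\<lambda>f. tar M f (ia f))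
               (\<lambda>x. munit M) (\<lambda>f. idt M (munit M)) eps"

definition admits_functorial_inverses :: "('o, 'a, 'z) moncat_scheme \<Rightarrow> bool" where
  "admits_functorial_inverses M \<longleftrightarrow> (\<exists>io ia eps. functorial_inverses_choice M io ia eps)"

end

theory Submission
  imports Defs
begin

definition fmap :: "('o, 'a, 'z) cat_scheme \<Rightarrow> ('o \<Rightarrow> 'o) \<Rightarrow> ('a \<Rightarrow> 'a) \<Rightarrow> bool" where
  "fmap C Fo Fa \<longleftrightarrow> (\<forall>f \<in> Arr C. Fa f \<in> Hom C (Fo (cdom C f)) (Fo (ccod C f)))"

definition invc :: "('o, 'a, 'z) cat_scheme \<Rightarrow> 'a \<Rightarrow> 'a" where
  "invc C f = (SOME g. g \<in> Hom C (ccod C f) (cdom C f) \<and> cmp C g f = idt C (cdom C f)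
      \<and> cmp C f g = idt C (ccod C f))"

lemma HomD: "f \<in> Hom C x y \<Longrightarrow> f \<in> Arr C \<and> cdom C f = x \<and> ccod C f = y"
  by (simp add: Hom_def)

lemma HomI: "f \<in> Arr C \<Longrightarrow> f \<in> Hom C (cdom C f) (ccod C f)"
  by (simp add: Hom_def)

lemma hom_obj: "category C \<Longrightarrow> f \<in> Hom C x y \<Longrightarrow> x \<in> Obj C \<and> y \<in> Obj C"
  unfolding category_def Hom_def by auto

lemma comp_hom: "category C \<Longrightarrow> f \<in> Hom C x y \<Longrightarrow> g \<in> Hom C y z \<Longrightarrow> cmp C g f \<in> Hom C x z"
  using hom_obj[of C f x y] hom_obj[of C g y z] unfolding category_def by blast

lemma id_hom: "category C \<Longrightarrow> x \<in> Obj C \<Longrightarrow> idt C x \<in> Hom C x x"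
  unfolding category_def by blast

lemma idr: "category C \<Longrightarrow> f \<in> Hom C x y \<Longrightarrow> cmp C f (idt C x) = f"
  unfolding category_def Hom_def by auto

lemma idl: "category C \<Longrightarrow> f \<in> Hom C x y \<Longrightarrow> cmp C (idt C y) f = f"
  unfolding category_def Hom_def by auto

lemma assoc: "category C \<Longrightarrow> f \<in> Hom C w x \<Longrightarrow> g \<in> Hom C x y \<Longrightarrow> h \<in> Hom C y z \<Longrightarrow>
  cmp C h (cmp C g f) = cmp C (cmp C h g) f"
  unfolding category_def Hom_def by auto

lemma invc_props:
  assumes "iso_in C f x y"
  shows "invc C f \<in> Hom C y x \<and> cmp C (invc C f) f = idt C x \<and> cmp C f (invc C f) = idt C y"
proof -
  have f: "f \<in> Hom C x y" using assms unfolding iso_in_def by blast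
  then have d: "cdom C f = x" "ccod C f = y" using HomD[OF f] by simp_all
  show ?thesis unfolding invc_def d
    by (rule someI_ex) (use assms in \<open>auto simp: iso_in_def\<close>)
qed

lemma invc_iso: "iso_in C f x y \<Longrightarrow> iso_in C (invc C f) y x"
  using invc_props[of C f x y] unfolding iso_in_def by blast

lemma iso_comp:
  assumes C: "category C" and "iso_in C f x y" "iso_in C g y z"
  shows "iso_in C (cmp C g f) x z"
proof -
  obtain f' where f: "f \<in> Hom C x y" "f' \<in> Hom C y x" "cmp C f' f = idt C x" "cmp C f f' = idt C y"
    using assms(2) unfolding iso_in_def by blast
  obtain g' where g: "g \<in> Hom C y z" "g' \<in> Hom C z y" "cmp C g' g = idt C y" "cmp C g g' = idt C z"
    using assms(3) unfolding iso_in_def by blast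
  have "cmp C (cmp C f' g') (cmp C g f) = cmp C f' (cmp C (cmp C g' g) f)"
    using assoc[OF C comp_hom[OF C f(1) g(1)] g(2) f(2)] assoc[OF C f(1) g(1) g(2)] by simp
  also have "\<dots> = idt C x" using g f idl[OF C] by simp
  finally have 1: "cmp C (cmp C f' g') (cmp C g f) = idt C x" .
  have "cmp C (cmp C g f) (cmp C f' g') = cmp C g (cmp C (cmp C f f') g')"
    using assoc[OF C comp_hom[OF C g(2) f(2)] f(1) g(1)] assoc[OF C g(2) f(2) f(1)] by simp
  also have "\<dots> = idt C z" using g f idl[OF C] by simp
  finally have 2: "cmp C (cmp C g f) (cmp C f' g') = idt C z" .
  show ?thesis unfolding iso_in_def using 1 2 comp_hom[OF C] f g by blast
qed

lemma nat_isoI: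
  assumes i: "\<And>x. x \<in> Obj C \<Longrightarrow> iso_in C (\<theta> x) (Fo x) (Go x)"
    and n: "\<And>f. f \<in> Arr C \<Longrightarrow> cmp C (\<theta> (ccod C f)) (Fa f) = cmp C (Ga f) (\<theta> (cdom C f))"
  shows "nat_iso C Fo Fa Go Ga \<theta>"
proof -
  have h: "\<And>x. x \<in> Obj C \<Longrightarrow> \<theta> x \<in> Hom C (Fo x) (Go x)" using i unfolding iso_in_def by blast
  have 1: "\<forall>x\<in>Obj C. \<theta> x \<in> Hom C (Fo x) (Go x)" using h by blast
  have 2: "\<forall>f\<in>Arr C. cmp C (\<theta> (ccod C f)) (Fa f) = cmp C (Ga f) (\<theta> (cdom C f))" using n by blast
  have 3: "\<forall>x\<in>Obj C. iso_in C (\<theta> x) (Fo x) (Go x)" using i by blast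
  show ?thesis unfolding nat_iso_def nat_trans_def by (rule conjI[OF conjI[OF 1 2] 3])
qed

lemma nat_iso_inv:
  assumes C: "category C" and N: "nat_iso C Fo Fa Go Ga \<theta>"
    and F: "fmap C Fo Fa" and G: "fmap C Go Ga"
  shows "nat_iso C Go Ga Fo Fa (\<lambda>x. invc C (\<theta> x))"
proof -
  have iso: "\<And>x. x \<in> Obj C \<Longrightarrow> iso_in C (\<theta> x) (Fo x) (Go x)" using N unfolding nat_iso_def by blast
  have nat: "\<And>f. f \<in> Arr C \<Longrightarrow> cmp C (\<theta> (ccod C f)) (Fa f) = cmp C (Ga f) (\<theta> (cdom C f))"
    using N unfolding nat_iso_def nat_trans_def by blast
  have "cmp C (invc C (\<theta> (ccod C f))) (Ga f) = cmp C (Fa f) (invc C (\<theta> (cdom C f)))"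
    if f: "f \<in> Arr C" for f
  proof -
    let ?a = "cdom C f" and ?b = "ccod C f"
    have ab: "?a \<in> Obj C" "?b \<in> Obj C" using f C unfolding category_def by auto
    note ta = invc_props[OF iso[OF ab(1)]] and tb = invc_props[OF iso[OF ab(2)]]
    have ta0: "\<theta> ?a \<in> Hom C (Fo ?a) (Go ?a)" and tb0: "\<theta> ?b \<in> Hom C (Fo ?b) (Go ?b)"
      using iso ab unfolding iso_in_def by blast+
    have Ff: "Fa f \<in> Hom C (Fo ?a) (Fo ?b)" using F f unfolding fmap_def by blast
    have Gf: "Ga f \<in> Hom C (Go ?a) (Go ?b)" using G f unfolding fmap_def by blast
    have sa0: "invc C (\<theta> ?a) \<in> Hom C (Go ?a) (Fo ?a)" using ta by blast
    have sb0: "invc C (\<theta> ?b) \<in> Hom C (Go ?b) (Fo ?b)" using tb by blast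
    have "cmp C (invc C (\<theta> ?b)) (Ga f) =
          cmp C (invc C (\<theta> ?b)) (cmp C (Ga f) (cmp C (\<theta> ?a) (invc C (\<theta> ?a))))"
      using ta idr[OF C Gf] by simp
    also have "\<dots> = cmp C (invc C (\<theta> ?b)) (cmp C (cmp C (Ga f) (\<theta> ?a)) (invc C (\<theta> ?a)))"
      using assoc[OF C sa0 ta0 Gf] by simp
    also have "\<dots> = cmp C (invc C (\<theta> ?b)) (cmp C (cmp C (\<theta> ?b) (Fa f)) (invc C (\<theta> ?a)))"
      using nat f by simp
    also have "\<dots> = cmp C (cmp C (invc C (\<theta> ?b)) (cmp C (\<theta> ?b) (Fa f))) (invc C (\<theta> ?a))"
      using assoc[OF C sa0 comp_hom[OF C Ff tb0] sb0] by simp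
    also have "\<dots> = cmp C (cmp C (cmp C (invc C (\<theta> ?b)) (\<theta> ?b)) (Fa f)) (invc C (\<theta> ?a))"
      using assoc[OF C Ff tb0 sb0] by simp
    also have "\<dots> = cmp C (Fa f) (invc C (\<theta> ?a))"
      using tb idl[OF C Ff] by simp
    finally show ?thesis .
  qed
  note NN = this
  have II: "\<And>x. x \<in> Obj C \<Longrightarrow> iso_in C (invc C (\<theta> x)) (Go x) (Fo x)"
    by (rule invc_iso[OF iso])
  show ?thesis by (rule nat_isoI[OF II NN])
qed

lemma nat_iso_comp:
  assumes C: "category C" and N1: "nat_iso C Fo Fa Go Ga \<theta>" and N2: "nat_iso C Go Ga Ho Ha \<phi>"
    and F: "fmap C Fo Fa" and G: "fmap C Go Ga" and H: "fmap C Ho Ha"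
  shows "nat_iso C Fo Fa Ho Ha (\<lambda>x. cmp C (\<phi> x) (\<theta> x))"
proof -
  have iso1: "\<And>x. x \<in> Obj C \<Longrightarrow> iso_in C (\<theta> x) (Fo x) (Go x)" using N1 unfolding nat_iso_def by blast
  have iso2: "\<And>x. x \<in> Obj C \<Longrightarrow> iso_in C (\<phi> x) (Go x) (Ho x)" using N2 unfolding nat_iso_def by blast
  have nat1: "\<And>f. f \<in> Arr C \<Longrightarrow> cmp C (\<theta> (ccod C f)) (Fa f) = cmp C (Ga f) (\<theta> (cdom C f))"
    using N1 unfolding nat_iso_def nat_trans_def by blast
  have nat2: "\<And>f. f \<in> Arr C \<Longrightarrow> cmp C (\<phi> (ccod C f)) (Ga f) = cmp C (Ha f) (\<phi> (cdom C f))"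
    using N2 unfolding nat_iso_def nat_trans_def by blast
  have "cmp C (cmp C (\<phi> (ccod C f)) (\<theta> (ccod C f))) (Fa f) =
        cmp C (Ha f) (cmp C (\<phi> (cdom C f)) (\<theta> (cdom C f)))" if f: "f \<in> Arr C" for f
  proof -
    let ?a = "cdom C f" and ?b = "ccod C f"
    have ab: "?a \<in> Obj C" "?b \<in> Obj C" using f C unfolding category_def by auto
    have t: "\<theta> ?a \<in> Hom C (Fo ?a) (Go ?a)" "\<theta> ?b \<in> Hom C (Fo ?b) (Go ?b)"
      using iso1 ab unfolding iso_in_def by blast+
    have p: "\<phi> ?a \<in> Hom C (Go ?a) (Ho ?a)" "\<phi> ?b \<in> Hom C (Go ?b) (Ho ?b)"
      using iso2 ab unfolding iso_in_def by blast+
    have Ff: "Fa f \<in> Hom C (Fo ?a) (Fo ?b)" using F f unfolding fmap_def by blast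
    have Gf: "Ga f \<in> Hom C (Go ?a) (Go ?b)" using G f unfolding fmap_def by blast
    have Hf: "Ha f \<in> Hom C (Ho ?a) (Ho ?b)" using H f unfolding fmap_def by blast
    have "cmp C (cmp C (\<phi> ?b) (\<theta> ?b)) (Fa f) = cmp C (\<phi> ?b) (cmp C (\<theta> ?b) (Fa f))"
      using assoc[OF C Ff t(2) p(2)] by simp
    also have "\<dots> = cmp C (\<phi> ?b) (cmp C (Ga f) (\<theta> ?a))" using nat1 f by simp
    also have "\<dots> = cmp C (cmp C (\<phi> ?b) (Ga f)) (\<theta> ?a)" using assoc[OF C t(1) Gf p(2)] by simp
    also have "\<dots> = cmp C (cmp C (Ha f) (\<phi> ?a)) (\<theta> ?a)" using nat2 f by simp
    also have "\<dots> = cmp C (Ha f) (cmp C (\<phi> ?a) (\<theta> ?a))" using assoc[OF C t(1) p(1) Hf] by simp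
    finally show ?thesis .
  qed
  note NN = this
  have II: "\<And>x. x \<in> Obj C \<Longrightarrow> iso_in C (cmp C (\<phi> x) (\<theta> x)) (Fo x) (Ho x)"
    by (rule iso_comp[OF C iso1 iso2])
  show ?thesis by (rule nat_isoI[OF II NN])
qed


lemma mc1: "monoidal_category M \<Longrightarrow> (\<forall>x \<in> Obj M. \<forall>y \<in> Obj M. tob M x y \<in> Obj M)"
  unfolding monoidal_category_def by (elim conjE) assumption

lemma mc2: "monoidal_category M \<Longrightarrow> (\<forall>f \<in> Arr M. \<forall>g \<in> Arr M. tar M f g \<in> Hom M (tob M (cdom M f) (cdom M g)) (tob M (ccod M f) (ccod M g)))"
  unfolding monoidal_category_def by (elim conjE) assumption

lemma mc3: "monoidal_category M \<Longrightarrow> (\<forall>x \<in> Obj M. \<forall>y \<in> Obj M. tar M (idt M x) (idt M y) = idt M (tob M x y))"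
  unfolding monoidal_category_def by (elim conjE) assumption

lemma mc4: "monoidal_category M \<Longrightarrow> (\<forall>f \<in> Arr M. \<forall>f' \<in> Arr M. \<forall>g \<in> Arr M. \<forall>g' \<in> Arr M. cdom M f' = ccod M f \<longrightarrow> cdom M g' = ccod M g \<longrightarrow> tar M (cmp M f' f) (cmp M g' g) = cmp M (tar M f' g') (tar M f g))"
  unfolding monoidal_category_def by (elim conjE) assumption

lemma mc5: "monoidal_category M \<Longrightarrow> munit M \<in> Obj M"
  unfolding monoidal_category_def by (elim conjE) assumption

lemma mc6: "monoidal_category M \<Longrightarrow> (\<forall>x \<in> Obj M. \<forall>y \<in> Obj M. \<forall>z \<in> Obj M. iso_in M (massoc M x y z) (tob M (tob M x y) z) (tob M x (tob M y z)))"
  unfolding monoidal_category_def by (elim conjE) assumption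

lemma mc7: "monoidal_category M \<Longrightarrow> (\<forall>f \<in> Arr M. \<forall>g \<in> Arr M. \<forall>h \<in> Arr M. cmp M (massoc M (ccod M f) (ccod M g) (ccod M h)) (tar M (tar M f g) h) = cmp M (tar M f (tar M g h)) (massoc M (cdom M f) (cdom M g) (cdom M h)))"
  unfolding monoidal_category_def by (elim conjE) assumption

lemma mc8: "monoidal_category M \<Longrightarrow> (\<forall>x \<in> Obj M. iso_in M (lunit M x) (tob M (munit M) x) x)"
  unfolding monoidal_category_def by (elim conjE) assumption

lemma mc9: "monoidal_category M \<Longrightarrow> (\<forall>f \<in> Arr M. cmp M (lunit M (ccod M f)) (tar M (idt M (munit M)) f) = cmp M f (lunit M (cdom M f)))"
  unfolding monoidal_category_def by (elim conjE) assumption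

lemma mc10: "monoidal_category M \<Longrightarrow> (\<forall>x \<in> Obj M. iso_in M (runit M x) (tob M x (munit M)) x)"
  unfolding monoidal_category_def by (elim conjE) assumption

lemma mc11: "monoidal_category M \<Longrightarrow> (\<forall>f \<in> Arr M. cmp M (runit M (ccod M f)) (tar M f (idt M (munit M))) = cmp M f (runit M (cdom M f)))"
  unfolding monoidal_category_def by (elim conjE) assumption

lemma mc12: "monoidal_category M \<Longrightarrow> (\<forall>w \<in> Obj M. \<forall>x \<in> Obj M. \<forall>y \<in> Obj M. \<forall>z \<in> Obj M. cmp M (tar M (idt M w) (massoc M x y z)) (cmp M (massoc M w (tob M x y) z) (tar M (massoc M w x y) (idt M z))) = cmp M (massoc M w x (tob M y z)) (massoc M (tob M w x) y z))"
  unfolding monoidal_category_def by (elim conjE) assumption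

lemma mc13: "monoidal_category M \<Longrightarrow> (\<forall>x \<in> Obj M. \<forall>y \<in> Obj M. cmp M (tar M (idt M x) (lunit M y)) (massoc M x (munit M) y) = tar M (runit M x) (idt M y))"
  unfolding monoidal_category_def by (elim conjE) assumption

lemma mc_cat: "monoidal_category M \<Longrightarrow> category M"
  unfolding monoidal_category_def by (elim conjE) assumption

lemma iso_id: "category C \<Longrightarrow> x \<in> Obj C \<Longrightarrow> iso_in C (idt C x) x x"
proof -
  assume C: "category C" and x: "x \<in> Obj C"
  have i: "idt C x \<in> Hom C x x" using id_hom[OF C x] .
  have "cmp C (idt C x) (idt C x) = idt C x" using idl[OF C i] .
  then show ?thesis unfolding iso_in_def using i by blast
qed

lemma tob_obj: "monoidal_category M \<Longrightarrow> x \<in> Obj M \<Longrightarrow> y \<in> Obj M \<Longrightarrow> tob M x y \<in> Obj M"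
  by (erule mc1[rule_format]) assumption+

lemma tar_hom: "monoidal_category M \<Longrightarrow> f \<in> Hom M a b \<Longrightarrow> g \<in> Hom M c d \<Longrightarrow>
   tar M f g \<in> Hom M (tob M a c) (tob M b d)"
proof -
  assume M: "monoidal_category M" and f: "f \<in> Hom M a b" and g: "g \<in> Hom M c d"
  note F = HomD[OF f] and G = HomD[OF g]
  have "tar M f g \<in> Hom M (tob M (cdom M f) (cdom M g)) (tob M (ccod M f) (ccod M g))"
    using mc2[OF M, rule_format, of f g] F G by simp
  then show ?thesis using F G by simp
qed

lemma tar_id: "monoidal_category M \<Longrightarrow> x \<in> Obj M \<Longrightarrow> y \<in> Obj M \<Longrightarrow>
   tar M (idt M x) (idt M y) = idt M (tob M x y)"
  by (erule mc3[rule_format]) assumption+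

lemma interchange: "monoidal_category M \<Longrightarrow> f \<in> Hom M a b \<Longrightarrow> f' \<in> Hom M b c \<Longrightarrow>
   g \<in> Hom M a' b' \<Longrightarrow> g' \<in> Hom M b' c' \<Longrightarrow>
   tar M (cmp M f' f) (cmp M g' g) = cmp M (tar M f' g') (tar M f g)"
proof -
  assume M: "monoidal_category M" and h: "f \<in> Hom M a b" "f' \<in> Hom M b c"
    "g \<in> Hom M a' b'" "g' \<in> Hom M b' c'"
  have A: "f \<in> Arr M" "f' \<in> Arr M" "g \<in> Arr M" "g' \<in> Arr M"
    "cdom M f' = ccod M f" "cdom M g' = ccod M g" using h HomD by metis+
  then show ?thesis by (rule mc4[OF M, rule_format])
qed

lemma tar_iso:
  assumes M: "monoidal_category M" and "iso_in M f a b" "iso_in M g c d"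
  shows "iso_in M (tar M f g) (tob M a c) (tob M b d)"
proof -
  have C: "category M" using M mc_cat by blast
  obtain f' where f: "f \<in> Hom M a b" "f' \<in> Hom M b a" "cmp M f' f = idt M a" "cmp M f f' = idt M b"
    using assms(2) unfolding iso_in_def by blast
  obtain g' where g: "g \<in> Hom M c d" "g' \<in> Hom M d c" "cmp M g' g = idt M c" "cmp M g g' = idt M d"
    using assms(3) unfolding iso_in_def by blast
  have o: "a \<in> Obj M" "b \<in> Obj M" "c \<in> Obj M" "d \<in> Obj M"
    using hom_obj[OF C f(1)] hom_obj[OF C g(1)] by auto
  have 1: "cmp M (tar M f' g') (tar M f g) = idt M (tob M a c)"
    using interchange[OF M f(1) f(2) g(1) g(2)] f g tar_id[OF M o(1) o(3)] by simp
  have 2: "cmp M (tar M f g) (tar M f' g') = idt M (tob M b d)"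
    using interchange[OF M f(2) f(1) g(2) g(1)] f g tar_id[OF M o(2) o(4)] by simp
  show ?thesis unfolding iso_in_def using 1 2 tar_hom[OF M f(1) g(1)] tar_hom[OF M f(2) g(2)] by blast
qed

locale FI =
  fixes M :: "('o, 'a, 'z) moncat_scheme" and io :: "'o \<Rightarrow> 'o" and ia :: "'a \<Rightarrow> 'a"
    and eps :: "'o \<Rightarrow> 'a"
  assumes mon: "monoidal_category M" and fi: "functorial_inverses_choice M io ia eps"
begin

lemma C: "category M" using mon mc_cat by blast

lemma fi_end: "endofunctor M io ia"
  using fi[unfolded functorial_inverses_choice_def] by (rule conjunct1)

lemma fi_nat: "nat_iso M (\<lambda>x. tob M x (io x)) (\<lambda>f. tar M f (ia f)) (\<lambda>x. munit M) (\<lambda>f. idt M (munit M)) eps"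
  using fi[unfolded functorial_inverses_choice_def] by (rule conjunct2)

lemma io_obj: "x \<in> Obj M \<Longrightarrow> io x \<in> Obj M"
  using fi_end[unfolded endofunctor_def, THEN conjunct1] by (rule bspec)

lemma obj_dom: "f \<in> Arr M \<Longrightarrow> cdom M f \<in> Obj M \<and> ccod M f \<in> Obj M"
  using hom_obj[OF C HomI] by blast

lemma ia_arr: "f \<in> Arr M \<Longrightarrow> ia f \<in> Hom M (io (cdom M f)) (io (ccod M f))"
proof -
  assume f: "f \<in> Arr M"
  have h: "f \<in> Hom M (cdom M f) (ccod M f)" using HomI[OF f] .
  have o: "cdom M f \<in> Obj M" "ccod M f \<in> Obj M" using hom_obj[OF C h] by auto
  have "\<forall>x \<in> Obj M. \<forall>y \<in> Obj M. \<forall>f \<in> Hom M x y. ia f \<in> Hom M (io x) (io y)"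
    using fi_end[unfolded endofunctor_def, THEN conjunct2, THEN conjunct1] .
  then show ?thesis using o h by blast
qed

lemma ia_arr': "f \<in> Arr M \<Longrightarrow> ia f \<in> Arr M \<and> cdom M (ia f) = io (cdom M f) \<and> ccod M (ia f) = io (ccod M f)"
  using HomD[OF ia_arr] by blast

lemma eps_iso: "x \<in> Obj M \<Longrightarrow> iso_in M (eps x) (tob M x (io x)) (munit M)"
  using fi_nat[unfolded nat_iso_def, THEN conjunct2] by (rule bspec)

lemma eps_hom: "x \<in> Obj M \<Longrightarrow> eps x \<in> Hom M (tob M x (io x)) (munit M)"
  using eps_iso unfolding iso_in_def by blast

lemma eps_nat: "f \<in> Arr M \<Longrightarrow> cmp M (eps (ccod M f)) (tar M f (ia f)) = eps (cdom M f)"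
proof -
  assume f: "f \<in> Arr M"
  have "\<forall>f \<in> Arr M. cmp M (eps (ccod M f)) (tar M f (ia f)) = cmp M (idt M (munit M)) (eps (cdom M f))"
    using fi_nat[unfolded nat_iso_def nat_trans_def, THEN conjunct1, THEN conjunct2] .
  then have "cmp M (eps (ccod M f)) (tar M f (ia f)) = cmp M (idt M (munit M)) (eps (cdom M f))"
    using f by blast
  also have "\<dots> = eps (cdom M f)"
    using idl[OF C eps_hom] obj_dom[OF f] by blast
  finally show ?thesis .
qed

lemma uobj: "munit M \<in> Obj M" using mc5[OF mon] .


lemma fH: "f \<in> Arr M \<Longrightarrow> f \<in> Hom M (cdom M f) (ccod M f)" by (rule HomI)

lemma iiH: "f \<in> Arr M \<Longrightarrow> ia (ia f) \<in> Hom M (io (io (cdom M f))) (io (io (ccod M f)))"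
  using ia_arr[of "ia f"] ia_arr'[of f] by simp

lemma F0: "fmap M (\<lambda>x. io (io x)) (\<lambda>f. ia (ia f))"
  unfolding fmap_def using iiH by blast

lemma F1: "fmap M (\<lambda>x. tob M (munit M) (io (io x))) (\<lambda>f. tar M (idt M (munit M)) (ia (ia f)))"
  unfolding fmap_def using tar_hom[OF mon id_hom[OF C uobj] iiH] by blast

lemma F2: "fmap M (\<lambda>x. tob M (tob M x (io x)) (io (io x))) (\<lambda>f. tar M (tar M f (ia f)) (ia (ia f)))"
  unfolding fmap_def using tar_hom[OF mon tar_hom[OF mon fH ia_arr] iiH] by blast

lemma F3: "fmap M (\<lambda>x. tob M x (tob M (io x) (io (io x)))) (\<lambda>f. tar M f (tar M (ia f) (ia (ia f))))"
  unfolding fmap_def using tar_hom[OF mon fH tar_hom[OF mon ia_arr iiH]] by blast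

lemma F4: "fmap M (\<lambda>x. tob M x (munit M)) (\<lambda>f. tar M f (idt M (munit M)))"
  unfolding fmap_def using tar_hom[OF mon fH id_hom[OF C uobj]] by blast

lemma F5: "fmap M (\<lambda>x. x) (\<lambda>f. f)"
  unfolding fmap_def using fH by blast

lemma P1: "nat_iso M (\<lambda>x. tob M (munit M) (io (io x))) (\<lambda>f. tar M (idt M (munit M)) (ia (ia f)))
   (\<lambda>x. io (io x)) (\<lambda>f. ia (ia f)) (\<lambda>x. lunit M (io (io x)))"
proof -
  have iso: "iso_in M (lunit M (io (io x))) (tob M (munit M) (io (io x))) (io (io x))"
    if "x \<in> Obj M" for x using mc8[OF mon] io_obj[OF io_obj[OF that]] by (rule bspec)
  have nat: "cmp M (lunit M (io (io (ccod M f)))) (tar M (idt M (munit M)) (ia (ia f))) =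
     cmp M (ia (ia f)) (lunit M (io (io (cdom M f))))" if f: "f \<in> Arr M" for f
  proof -
    have "ia (ia f) \<in> Arr M" using HomD[OF iiH[OF f]] by blast
    then have "cmp M (lunit M (ccod M (ia (ia f)))) (tar M (idt M (munit M)) (ia (ia f))) =
      cmp M (ia (ia f)) (lunit M (cdom M (ia (ia f))))" using mc9[OF mon] by blast
    then show ?thesis using HomD[OF iiH[OF f]] by simp
  qed
  show ?thesis by (rule nat_isoI[OF iso nat])
qed

lemma P2: "nat_iso M (\<lambda>x. tob M (tob M x (io x)) (io (io x))) (\<lambda>f. tar M (tar M f (ia f)) (ia (ia f)))
   (\<lambda>x. tob M (munit M) (io (io x))) (\<lambda>f. tar M (idt M (munit M)) (ia (ia f)))
   (\<lambda>x. tar M (eps x) (idt M (io (io x))))"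
proof -
  have iso: "iso_in M (tar M (eps x) (idt M (io (io x)))) (tob M (tob M x (io x)) (io (io x)))
     (tob M (munit M) (io (io x)))"
    if x: "x \<in> Obj M" for x
    using tar_iso[OF mon eps_iso[OF x] iso_id[OF C io_obj[OF io_obj[OF x]]]] .
  have nat: "cmp M (tar M (eps (ccod M f)) (idt M (io (io (ccod M f))))) (tar M (tar M f (ia f)) (ia (ia f))) =
     cmp M (tar M (idt M (munit M)) (ia (ia f))) (tar M (eps (cdom M f)) (idt M (io (io (cdom M f)))))"
    if f: "f \<in> Arr M" for f
  proof -
    have ob: "cdom M f \<in> Obj M" "ccod M f \<in> Obj M" using obj_dom[OF f] by auto
    have l: "cmp M (tar M (eps (ccod M f)) (idt M (io (io (ccod M f))))) (tar M (tar M f (ia f)) (ia (ia f)))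
       = tar M (cmp M (eps (ccod M f)) (tar M f (ia f))) (cmp M (idt M (io (io (ccod M f)))) (ia (ia f)))"
      using interchange[OF mon tar_hom[OF mon fH[OF f] ia_arr[OF f]] eps_hom[OF ob(2)] iiH[OF f]
        id_hom[OF C io_obj[OF io_obj[OF ob(2)]]]] by simp
    have r: "cmp M (tar M (idt M (munit M)) (ia (ia f))) (tar M (eps (cdom M f)) (idt M (io (io (cdom M f)))))
       = tar M (cmp M (idt M (munit M)) (eps (cdom M f))) (cmp M (ia (ia f)) (idt M (io (io (cdom M f)))))"
      using interchange[OF mon eps_hom[OF ob(1)] id_hom[OF C uobj]
        id_hom[OF C io_obj[OF io_obj[OF ob(1)]]] iiH[OF f]] by simp
    show ?thesis unfolding l r eps_nat[OF f] idl[OF C iiH[OF f]] idr[OF C iiH[OF f]]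
        idl[OF C eps_hom[OF ob(1)]] ..
  qed
  show ?thesis by (rule nat_isoI[OF iso nat])
qed

lemma P3: "nat_iso M (\<lambda>x. tob M (tob M x (io x)) (io (io x))) (\<lambda>f. tar M (tar M f (ia f)) (ia (ia f)))
   (\<lambda>x. tob M x (tob M (io x) (io (io x)))) (\<lambda>f. tar M f (tar M (ia f) (ia (ia f))))
   (\<lambda>x. massoc M x (io x) (io (io x)))"
proof -
  have iso: "iso_in M (massoc M x (io x) (io (io x))) (tob M (tob M x (io x)) (io (io x)))
     (tob M x (tob M (io x) (io (io x))))"
    if x: "x \<in> Obj M" for x
  proof -
    have y: "io x \<in> Obj M" "io (io x) \<in> Obj M" using io_obj x by auto
    show ?thesis using bspec[OF bspec[OF bspec[OF mc6[OF mon] x] y(1)] y(2)] .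
  qed
  have nat: "cmp M (massoc M (ccod M f) (io (ccod M f)) (io (io (ccod M f)))) (tar M (tar M f (ia f)) (ia (ia f))) =
     cmp M (tar M f (tar M (ia f) (ia (ia f)))) (massoc M (cdom M f) (io (cdom M f)) (io (io (cdom M f))))"
    if f: "f \<in> Arr M" for f
  proof -
    have a: "ia f \<in> Arr M" "ia (ia f) \<in> Arr M" using ia_arr'[OF f] HomD[OF iiH[OF f]] by auto
    have "cmp M (massoc M (ccod M f) (ccod M (ia f)) (ccod M (ia (ia f)))) (tar M (tar M f (ia f)) (ia (ia f))) =
      cmp M (tar M f (tar M (ia f) (ia (ia f)))) (massoc M (cdom M f) (cdom M (ia f)) (cdom M (ia (ia f))))"
      using mc7[OF mon] f a by blast
    then show ?thesis using ia_arr'[OF f] HomD[OF iiH[OF f]] by simp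
  qed
  show ?thesis by (rule nat_isoI[OF iso nat])
qed

lemma P4: "nat_iso M (\<lambda>x. tob M x (tob M (io x) (io (io x)))) (\<lambda>f. tar M f (tar M (ia f) (ia (ia f))))
   (\<lambda>x. tob M x (munit M)) (\<lambda>f. tar M f (idt M (munit M)))
   (\<lambda>x. tar M (idt M x) (eps (io x)))"
proof -
  have iso: "iso_in M (tar M (idt M x) (eps (io x))) (tob M x (tob M (io x) (io (io x)))) (tob M x (munit M))"
    if x: "x \<in> Obj M" for x
    using tar_iso[OF mon iso_id[OF C x] eps_iso[OF io_obj[OF x]]] .
  have nat: "cmp M (tar M (idt M (ccod M f)) (eps (io (ccod M f)))) (tar M f (tar M (ia f) (ia (ia f)))) =
     cmp M (tar M f (idt M (munit M))) (tar M (idt M (cdom M f)) (eps (io (cdom M f))))"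
    if f: "f \<in> Arr M" for f
  proof -
    have ob: "cdom M f \<in> Obj M" "ccod M f \<in> Obj M" using obj_dom[OF f] by auto
    have en: "cmp M (eps (io (ccod M f))) (tar M (ia f) (ia (ia f))) = eps (io (cdom M f))"
      using eps_nat[of "ia f"] ia_arr'[OF f] by simp
    have l: "cmp M (tar M (idt M (ccod M f)) (eps (io (ccod M f)))) (tar M f (tar M (ia f) (ia (ia f))))
       = tar M (cmp M (idt M (ccod M f)) f) (cmp M (eps (io (ccod M f))) (tar M (ia f) (ia (ia f))))"
      using interchange[OF mon fH[OF f] id_hom[OF C ob(2)] tar_hom[OF mon ia_arr[OF f] iiH[OF f]]
        eps_hom[OF io_obj[OF ob(2)]]] by simp
    have r: "cmp M (tar M f (idt M (munit M))) (tar M (idt M (cdom M f)) (eps (io (cdom M f))))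
       = tar M (cmp M f (idt M (cdom M f))) (cmp M (idt M (munit M)) (eps (io (cdom M f))))"
      using interchange[OF mon id_hom[OF C ob(1)] fH[OF f] eps_hom[OF io_obj[OF ob(1)]]
        id_hom[OF C uobj]] by simp
    show ?thesis unfolding l r en idl[OF C fH[OF f]] idr[OF C fH[OF f]]
        idl[OF C eps_hom[OF io_obj[OF ob(1)]]] ..
  qed
  show ?thesis by (rule nat_isoI[OF iso nat])
qed

lemma P5: "nat_iso M (\<lambda>x. tob M x (munit M)) (\<lambda>f. tar M f (idt M (munit M))) (\<lambda>x. x) (\<lambda>f. f) (runit M)"
  by (rule nat_isoI) (erule bspec[OF mc10[OF mon]], erule bspec[OF mc11[OF mon]])

lemma main: "\<exists>\<theta>. nat_iso M (\<lambda>x. io (io x)) (\<lambda>f. ia (ia f)) (\<lambda>x. x) (\<lambda>f. f) \<theta>"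
proof -
  note Q1 = nat_iso_inv[OF C P1 F1 F0]
  note Q2 = nat_iso_inv[OF C P2 F2 F1]
  note R1 = nat_iso_comp[OF C Q1 Q2 F0 F1 F2]
  note R2 = nat_iso_comp[OF C R1 P3 F0 F2 F3]
  note R3 = nat_iso_comp[OF C R2 P4 F0 F3 F4]
  note R4 = nat_iso_comp[OF C R3 P5 F0 F4 F5]
  show ?thesis
    by (rule exI[where x="\<lambda>x. cmp M (runit M x) (cmp M (tar M (idt M x) (eps (io x)))
         (cmp M (massoc M x (io x) (io (io x))) (cmp M (invc M (tar M (eps x) (idt M (io (io x)))))
           (invc M (lunit M (io (io x)))))))"], rule R4)
qed
end

theorem lemma3p12:
  fixes M :: "('o, 'a, 'z) moncat_scheme"
    and io :: "'o \<Rightarrow> 'o" and ia :: "'a \<Rightarrow> 'a" and eps :: "'o \<Rightarrow> 'a"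
  assumes "monoidal_category M"
    and "admits_functorial_inverses M"
    and "functorial_inverses_choice M io ia eps"
  shows "\<exists>\<theta>. nat_iso M (\<lambda>x. io (io x)) (\<lambda>f. ia (ia f)) (\<lambda>x. x) (\<lambda>f. f) \<theta>"
proof -
  interpret FI M io ia eps using assms(1,3) by unfold_locales
  show ?thesis by (rule main)
qed

end
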